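(* Let $A,B\in M_n(\mathbb{R}_+)$ be triangularizable projector matrices (i.e. $A^2=A$ and $B^2=B$). If the max commutator $C=[A,B]_\oplus = AB\oplus BA$ is nilpotent, then $A$ and $B$ are simultaneously triangularizable.
   Context: Max algebra: $\mathbb{R}_+$ the nonnegative reals with $a\oplus b=\max\{a,b\}$ and ordinary multiplication; for $A,B\in M_n(\mathbb{R}_+)$, $(AB)_{ij}=\max_k a_{ik}b_{kj}$ and $(A\oplus B)_{ij}=\max\{a_{ij},b_{ij}\}$; all powers and products are in this sense. A matrix is nilpotent if some power is $0$. $GL_n(\mathbb{R}_+)$ is the set of matrices invertible under this product (the generalized permutation matrices). $A$ is triangularizable if $P^{-1}AP$ is upper triangular for some $P\in GL_n(\mathbb{R}_+)$; $A,B$ are simultaneously triangularizable if one $P\in GL_n(\mathbb{R}_+)$ makes both $P^{-1}AP$ and $P^{-1}BP$ upper triangular. *)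

theory Defs
  imports Complex_Main
begin

text \<open>n x n matrices over the max algebra (nonnegative reals, max as addition,
ordinary multiplication), represented as functions nat => nat => real,
with indices 0..n-1; entries outside the range are 0.\<close>

definition is_mmat :: "nat \<Rightarrow> (nat \<Rightarrow> nat \<Rightarrow> real) \<Rightarrow> bool" where
  "is_mmat n A \<longleftrightarrow> (\<forall>i j. (i < n \<and> j < n \<longrightarrow> 0 \<le> A i j) \<and>
                          (\<not> (i < n \<and> j < n) \<longrightarrow> A i j = 0))"

definition mmult :: "nat \<Rightarrow> (nat \<Rightarrow> nat \<Rightarrow> real) \<Rightarrow> (nat \<Rightarrow> nat \<Rightarrow> real) \<Rightarrow> (nat \<Rightarrow> nat \<Rightarrow> real)" where
  "mmult n A B = (\<lambda>i j. if i < n \<and> j < n then Max ((\<lambda>k. A i k * B k j) ` {..<n}) else 0)"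

definition mplus :: "nat \<Rightarrow> (nat \<Rightarrow> nat \<Rightarrow> real) \<Rightarrow> (nat \<Rightarrow> nat \<Rightarrow> real) \<Rightarrow> (nat \<Rightarrow> nat \<Rightarrow> real)" where
  "mplus n A B = (\<lambda>i j. if i < n \<and> j < n then max (A i j) (B i j) else 0)"

definition mid :: "nat \<Rightarrow> (nat \<Rightarrow> nat \<Rightarrow> real)" where
  "mid n = (\<lambda>i j. if i < n \<and> j < n \<and> i = j then 1 else 0)"

fun mpow :: "nat \<Rightarrow> (nat \<Rightarrow> nat \<Rightarrow> real) \<Rightarrow> nat \<Rightarrow> (nat \<Rightarrow> nat \<Rightarrow> real)" where
  "mpow n A 0 = mid n"
| "mpow n A (Suc k) = mmult n A (mpow n A k)"

definition mnilpotent :: "nat \<Rightarrow> (nat \<Rightarrow> nat \<Rightarrow> real) \<Rightarrow> bool" where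
  "mnilpotent n A \<longleftrightarrow> (\<exists>k. mpow n A k = (\<lambda>i j. 0))"

definition minverse_pair :: "nat \<Rightarrow> (nat \<Rightarrow> nat \<Rightarrow> real) \<Rightarrow> (nat \<Rightarrow> nat \<Rightarrow> real) \<Rightarrow> bool" where
  "minverse_pair n P Q \<longleftrightarrow> is_mmat n P \<and> is_mmat n Q \<and>
      mmult n P Q = mid n \<and> mmult n Q P = mid n"

definition upper_triangular :: "(nat \<Rightarrow> nat \<Rightarrow> real) \<Rightarrow> bool" where
  "upper_triangular M \<longleftrightarrow> (\<forall>i j. j < i \<longrightarrow> M i j = 0)"

definition mtriangularizable :: "nat \<Rightarrow> (nat \<Rightarrow> nat \<Rightarrow> real) \<Rightarrow> bool" where
  "mtriangularizable n A \<longleftrightarrow> (\<exists>P Q. minverse_pair n P Q \<and>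
      upper_triangular (mmult n (mmult n Q A) P))"

definition msim_triangularizable :: "nat \<Rightarrow> (nat \<Rightarrow> nat \<Rightarrow> real) \<Rightarrow> (nat \<Rightarrow> nat \<Rightarrow> real) \<Rightarrow> bool" where
  "msim_triangularizable n A B \<longleftrightarrow> (\<exists>P Q. minverse_pair n P Q \<and>
      upper_triangular (mmult n (mmult n Q A) P) \<and>
      upper_triangular (mmult n (mmult n Q B) P))"

end

theory Submission
  imports Defs
begin

lemma mmult_ge:
  assumes "i<n" "j<n" "k<n" shows "A i k * B k j \<le> mmult n A B i j"
  using assms unfolding mmult_def by (auto intro!: Max_ge)

lemma mmult_attain:
  assumes "i<n" "j<n" shows "\<exists>k<n. mmult n A B i j = A i k * B k j"
proof -
  have "Max ((\<lambda>k. A i k * B k j) ` {..<n}) \<in> (\<lambda>k. A i k * B k j) ` {..<n}"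
    by (rule Max_in) (use assms in auto)
  then show ?thesis using assms unfolding mmult_def by auto
qed

lemma mmult_eqI:
  assumes "i<n" "j<n" "\<And>k. k<n \<Longrightarrow> A i k * B k j \<le> c" "m<n" "A i m * B m j = c"
  shows "mmult n A B i j = c"
  using assms unfolding mmult_def by (auto intro!: Max_eqI)

lemma mmat_nz: "is_mmat n A \<Longrightarrow> A i j \<noteq> 0 \<Longrightarrow> i<n \<and> j<n"
  unfolding is_mmat_def by blast

lemma mmat_nonneg: "is_mmat n A \<Longrightarrow> 0 \<le> A i j"
  unfolding is_mmat_def by (metis order_refl)

lemma idem_trans:
  assumes "is_mmat n A" "mmult n A A = A" "A i j > 0" "A j k > 0"
  shows "A i k > 0"
proof -
  have "i<n" "j<n" "k<n" using mmat_nz[OF assms(1), of i j] mmat_nz[OF assms(1), of j k] assms(3,4) by auto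
  then have "A i j * A j k \<le> A i k" using mmult_ge[of i n k j A A] assms(2) by simp
  moreover have "A i j * A j k > 0" using assms by simp
  ultimately show ?thesis by linarith
qed

lemma tri_no2:
  assumes mm: "is_mmat n A" and tr: "mtriangularizable n A" and p1: "A i j > 0" and p2: "A j i > 0"
  shows "i = j"
proof (rule ccontr)
  assume ne: "i \<noteq> j"
  obtain P Q where inv: "minverse_pair n P Q" and ut: "upper_triangular (mmult n (mmult n Q A) P)"
    using tr unfolding mtriangularizable_def by blast
  have ij: "i<n" "j<n" using mmat_nz[OF mm, of i j] p1 by auto
  have PQ: "mmult n P Q = mid n" and mP: "is_mmat n P" and mQ: "is_mmat n Q"
    using inv unfolding minverse_pair_def by auto
  have pos: "\<exists>k<n. P x k > 0 \<and> Q k x > 0" if xn: "x<n" for x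
  proof -
    obtain k where k: "k<n" "mmult n P Q x x = P x k * Q k x" using mmult_attain[OF xn xn] by blast
    then have "P x k * Q k x = 1" using PQ xn by (simp add: mid_def)
    moreover have "P x k \<ge> 0" "Q k x \<ge> 0" using mP mQ mmat_nonneg by blast+
    ultimately have "P x k > 0 \<and> Q k x > 0"
      by (metis less_eq_real_def mult_zero_left mult_zero_right zero_neq_one)
    then show ?thesis using k by blast
  qed
  obtain k where k: "k<n" "P i k > 0" "Q k i > 0" using pos ij by blast
  obtain l where l: "l<n" "P j l > 0" "Q l j > 0" using pos ij by blast
  have key: "Q s x * A x y * P y t > 0 \<Longrightarrow> s<n \<Longrightarrow> t<n \<Longrightarrow> x<n \<Longrightarrow> y<n \<Longrightarrow> \<not> t < s" for s t x y
  proof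
    assume h: "Q s x * A x y * P y t > 0" "s<n" "t<n" "x<n" "y<n" "t<s"
    have "Q s x * A x y \<le> mmult n Q A s y" using mmult_ge h by blast
    then have "Q s x * A x y * P y t \<le> mmult n Q A s y * P y t"
      using mP mmat_nonneg mult_right_mono by blast
    also have "\<dots> \<le> mmult n (mmult n Q A) P s t" using mmult_ge h by blast
    finally have "mmult n (mmult n Q A) P s t > 0" using h by linarith
    then show False using ut h unfolding upper_triangular_def by force
  qed
  have "\<not> l < k" using key[of k i j l] k l ij p1 by simp
  moreover have "\<not> k < l" using key[of l j i k] k l ij p2 by simp
  ultimately have "k = l" by simp
  have "P i k * Q k j \<le> mmult n P Q i j" using mmult_ge k ij by blast
  then have "P i k * Q k j \<le> 0" using PQ ne by (simp add: mid_def)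
  moreover have "P i k * Q k j > 0" using k l \<open>k = l\<close> by simp
  ultimately show False by linarith
qed


lemma MB:
  assumes tB': "RB O RB \<subseteq> RB"
    and h: "(u,w) \<in> (RA O RB)\<^sup>+" and wz: "(w,z) \<in> RB"
  shows "(u,z) \<in> (RA O RB)\<^sup>+"
proof -
  have "(u,w) \<in> RA O RB \<or> (\<exists>s. (u,s) \<in> (RA O RB)\<^sup>+ \<and> (s,w) \<in> RA O RB)"
    using h by (meson tranclE)
  moreover
  { assume "(u,w) \<in> RA O RB"
    then have ?thesis using tB' wz by blast }
  moreover
  { fix s assume s1: "(u,s) \<in> (RA O RB)\<^sup>+" and s2: "(s,w) \<in> RA O RB"
    then have "(s,z) \<in> RA O RB" using tB' wz by blast
    then have ?thesis using s1 by (meson trancl.trancl_into_trancl) }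
  ultimately show ?thesis by blast
qed

lemma AM:
  assumes tA': "RA O RA \<subseteq> RA"
    and wu: "(w,u) \<in> RA" and h: "(u,z) \<in> (RA O RB)\<^sup>+"
  shows "(w,z) \<in> (RA O RB)\<^sup>+"
proof -
  have "(u,z) \<in> RA O RB \<or> (\<exists>s. (u,s) \<in> RA O RB \<and> (s,z) \<in> (RA O RB)\<^sup>+)"
    using h by (meson converse_tranclE)
  moreover
  { assume "(u,z) \<in> RA O RB"
    then have ?thesis using tA' wu by blast }
  moreover
  { fix s assume s1: "(u,s) \<in> RA O RB" and s2: "(s,z) \<in> (RA O RB)\<^sup>+"
    then have "(w,s) \<in> RA O RB" using tA' wu by blast
    then have ?thesis using s2 by (meson trancl_into_trancl2) }
  ultimately show ?thesis by blast
qed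

lemma nf:
  assumes tA': "RA O RA \<subseteq> RA"
    and tB': "RB O RB \<subseteq> RB"
    and "(x,y) \<in> (RA \<union> RB)\<^sup>+"
  shows "(x,y)\<in>RA \<or> (x,y)\<in>RB \<or> (x,y) \<in> RB O RA \<or>
         (\<exists>u w. (x = u \<or> (x,u)\<in>RB) \<and> (u,w) \<in> (RA O RB)\<^sup>+ \<and> (w = y \<or> (w,y) \<in> RA))"
  using assms(3)
proof (induction rule: trancl_induct)
  case (base y)
  then show ?case by blast
next
  case (step y z)
  have yz: "(y,z) \<in> RA \<union> RB" by fact
  { assume "(x,y)\<in>RA"
    then have ?case using yz tA' by blast }
  moreover
  { assume "(x,y)\<in>RB"
    then have ?case using yz tB' by blast }
  moreover
  { assume "(x,y)\<in>RB O RA"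
    then obtain s where s: "(x,s)\<in>RB" "(s,y)\<in>RA" by blast
    have ?case
    proof (cases "(y,z)\<in>RA")
      case True then show ?thesis using s tA' by blast
    next
      case False
      then have "(y,z)\<in>RB" using yz by blast
      then have "(s,z) \<in> (RA O RB)\<^sup>+" using s by blast
      then show ?thesis using s by blast
    qed }
  moreover
  { fix u w assume h1: "x = u \<or> (x,u)\<in>RB" and h2: "(u,w) \<in> (RA O RB)\<^sup>+"
      and h3: "w = y \<or> (w,y) \<in> RA"
    have ?case
    proof (cases "(y,z)\<in>RA")
      case True
      then have "(w,z)\<in>RA" using h3 tA' by blast
      then show ?thesis using h1 h2 by blast
    next
      case False
      then have yz: "(y,z)\<in>RB" using yz by blast
      have "(u,z) \<in> (RA O RB)\<^sup>+"
      proof (cases "w = y")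
        case True
        then show ?thesis using MB[OF tB' h2] yz by blast
      next
        case False
        then have "(w,z) \<in> RA O RB" using h3 yz by blast
        then show ?thesis using h2 by (meson trancl.trancl_into_trancl)
      qed
      then show ?thesis using h1 by blast
    qed }
  ultimately show ?case using step.IH by blast
qed

lemma acyc:
  assumes tA': "RA O RA \<subseteq> RA"
    and tB': "RB O RB \<subseteq> RB"
    and iA: "\<And>x. (x,x) \<notin> RA" and iB: "\<And>x. (x,x) \<notin> RB"
    and iM: "\<And>x. (x,x) \<notin> (RA O RB)\<^sup>+"
  shows "(v,v) \<notin> (RA \<union> RB)\<^sup>+"
proof
  assume "(v,v) \<in> (RA \<union> RB)\<^sup>+"
  note N = nf[OF tA' tB' this]
  { assume "(v,v)\<in>RB O RA"
    then obtain s where "(v,s)\<in>RB" "(s,v)\<in>RA" by blast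
    then have "(s,s) \<in> RA O RB" by blast
    then have False using iM by blast }
  moreover
  { fix u w assume h1: "v = u \<or> (v,u)\<in>RB" and h2: "(u,w) \<in> (RA O RB)\<^sup>+"
      and h3: "w = v \<or> (w,v) \<in> RA"
    have False
    proof (cases "v = u")
      case True
      show False
      proof (cases "w = v")
        case True
        then show False using h2 iM \<open>v = u\<close> by blast
      next
        case False
        then have "(w,u)\<in>RA" using h3 \<open>v = u\<close> by blast
        then have "(w,w) \<in> (RA O RB)\<^sup>+" using AM[OF tA' _ h2] by blast
        then show False using iM by blast
      qed
    next
      case False
      then have vu: "(v,u)\<in>RB" using h1 by blast
      show False
      proof (cases "w = v")
        case True
        then have "(u,u) \<in> (RA O RB)\<^sup>+" using MB[OF tB' h2] vu by blast
        then show False using iM by blast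
      next
        case False
        then have "(w,u)\<in>RA O RB" using h3 vu by blast
        then have "(w,w) \<in> (RA O RB)\<^sup>+" using h2 by (meson trancl_into_trancl2)
        then show False using iM by blast
      qed
    qed }
  ultimately show False using N iA iB by blast
qed

lemma relpow_lt:
  assumes "T \<subseteq> {..<n} \<times> {..<n}" shows "(x,y) \<in> T^^k \<Longrightarrow> x<n \<Longrightarrow> y<n"
proof (induction k arbitrary: y)
  case 0 then show ?case by simp
next
  case (Suc k)
  then obtain z where "(x,z) \<in> T^^k" "(z,y) \<in> T" by (meson relpow_Suc_E)
  then show ?case using assms by blast
qed

lemma pow_pos:
  assumes T: "\<And>i j. (i,j)\<in>T \<Longrightarrow> i<n \<and> j<n \<and> C i j > 0"
  shows "(x,y) \<in> T^^k \<Longrightarrow> x<n \<Longrightarrow> y<n \<Longrightarrow> mpow n C k x y > 0"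
proof (induction k arbitrary: x)
  case 0 then show ?case by (simp add: mid_def)
next
  case (Suc k)
  then obtain z where z: "(x,z) \<in> T" "(z,y) \<in> T^^k" by (meson relpow_Suc_D2)
  then have "mpow n C k z y > 0" using Suc T by blast
  moreover have "C x z > 0" "z < n" using z T by auto
  ultimately have "C x z * mpow n C k z y > 0" by simp
  also have "\<dots> \<le> mmult n C (mpow n C k) x y" using mmult_ge Suc.prems \<open>z<n\<close> by blast
  finally show ?case by simp
qed

lemma nil_acyc:
  assumes T: "\<And>i j. (i,j)\<in>T \<Longrightarrow> i<n \<and> j<n \<and> C i j > 0"
    and nil: "mnilpotent n C"
  shows "(u,u) \<notin> T\<^sup>+"
proof
  assume "(u,u) \<in> T\<^sup>+"
  then obtain m where m: "m > 0" "(u,u) \<in> T^^m" by (meson trancl_power)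
  obtain K where K: "mpow n C K = (\<lambda>i j. 0)" using nil unfolding mnilpotent_def by blast
  have un: "u < n" using m T by (metis gr0_implies_Suc relpow_Suc_D2)
  have all: "(u,u) \<in> T^^(m*j)" for j
  proof (induction j)
    case 0 then show ?case by simp
  next
    case (Suc j)
    have "T^^(m * Suc j) = T^^m O T^^(m*j)" by (simp add: relpow_add)
    then show ?case using Suc m by blast
  qed
  have "m*K = K + (m*K - K)" using m by simp
  then have "T^^(m*K) = T^^K O T^^(m*K - K)" by (metis relpow_add)
  then obtain y where y: "(u,y) \<in> T^^K" using all[of K] by blast
  have Tsub: "T \<subseteq> {..<n} \<times> {..<n}" using T by auto
  have "y < n" using relpow_lt[OF Tsub y un] .
  then have "mpow n C K u y > 0" using pow_pos[OF T y un] by blast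
  then show False using K by simp
qed


lemma topo:
  fixes R :: "(nat \<times> nat) set"
  assumes sub: "R \<subseteq> {..<n} \<times> {..<n}" and ac: "\<And>v. (v,v) \<notin> R\<^sup>+"
  shows "\<exists>\<rho>. bij_betw \<rho> {..<n} {..<n} \<and> (\<forall>u v. (u,v)\<in>R \<longrightarrow> \<rho> u < \<rho> v)"
proof -
  define h where "h v = card {u. (u,v) \<in> R\<^sup>+}" for v
  define key where "key v = h v * n + v" for v
  define \<rho> where "\<rho> v = card {w\<in>{..<n}. key w < key v}" for v
  have tsub: "R\<^sup>+ \<subseteq> {..<n} \<times> {..<n}" using trancl_subset_Sigma[OF sub] .
  have fin: "finite {u. (u,v) \<in> R\<^sup>+}" for v
    by (rule finite_subset[of _ "{..<n}"]) (use tsub in auto)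
  have hlt: "h u < h v" if "(u,v) \<in> R" for u v
  proof -
    have "{w. (w,u) \<in> R\<^sup>+} \<subset> {w. (w,v) \<in> R\<^sup>+}"
    proof
      show "{w. (w,u) \<in> R\<^sup>+} \<subseteq> {w. (w,v) \<in> R\<^sup>+}" using that by (auto intro: trancl_into_trancl)
      show "{w. (w,u) \<in> R\<^sup>+} \<noteq> {w. (w,v) \<in> R\<^sup>+}" using that ac by blast
    qed
    then show ?thesis unfolding h_def by (rule psubset_card_mono[OF fin])
  qed
  have keylt: "key u < key v" if "(u,v) \<in> R" for u v
  proof -
    have "u < n" "v < n" using that sub by auto
    have "Suc (h u) \<le> h v" using hlt[OF that] by simp
    then have "Suc (h u) * n \<le> h v * n" by (rule mult_le_mono1)
    then show ?thesis unfolding key_def using \<open>u<n\<close> by simp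
  qed
  have keyinj: "u = v" if "u<n" "v<n" "key u = key v" for u v
  proof -
    have "(h u * n + u) mod n = u" "(h v * n + v) mod n = v" using that by auto
    then show ?thesis using that unfolding key_def by metis
  qed
  have rholt: "\<rho> u < \<rho> v" if "u<n" "key u < key v" for u v
  proof -
    have "{w\<in>{..<n}. key w < key u} \<subset> {w\<in>{..<n}. key w < key v}"
      using that by auto
    then show ?thesis unfolding \<rho>_def by (rule psubset_card_mono[rotated]) simp
  qed
  have rhon: "\<rho> v < n" if vn: "v < n" for v
  proof -
    have "{w\<in>{..<n}. key w < key v} \<subseteq> {..<n} - {v}" by auto
    then have "\<rho> v \<le> card ({..<n} - {v})" unfolding \<rho>_def by (rule card_mono[rotated]) simp
    also have "\<dots> = n - 1" using vn by (simp add: card_Diff_singleton_if)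
    finally show ?thesis using vn by linarith
  qed
  have inj: "inj_on \<rho> {..<n}"
  proof (rule inj_onI)
    fix u v assume uv: "u \<in> {..<n}" "v \<in> {..<n}" "\<rho> u = \<rho> v"
    show "u = v"
    proof (rule ccontr)
      assume "u \<noteq> v"
      then have "key u \<noteq> key v" using keyinj uv by auto
      then have "key u < key v \<or> key v < key u" by auto
      then show False using rholt uv by (metis lessThan_iff less_irrefl)
    qed
  qed
  have img: "\<rho> ` {..<n} = {..<n}"
    by (rule card_subset_eq) (use rhon card_image[OF inj] in auto)
  have "bij_betw \<rho> {..<n} {..<n}" using inj img by (simp add: bij_betw_def)
  moreover have "\<forall>u v. (u,v)\<in>R \<longrightarrow> \<rho> u < \<rho> v"
    using keylt rholt sub by blast
  ultimately show ?thesis by blast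
qed


lemma ut_perm:
  assumes edge: "\<And>k l. k<n \<Longrightarrow> l<n \<Longrightarrow> k\<noteq>l \<Longrightarrow> X k l \<noteq> 0 \<Longrightarrow> \<rho> k < \<rho> l"
  shows "upper_triangular (mmult n (mmult n (\<lambda>i k. if i<n \<and> k<n \<and> \<rho> k = i then 1 else 0) X)
                                   (\<lambda>k j. if k<n \<and> j<n \<and> \<rho> k = j then 1 else 0))"
  (is "upper_triangular (mmult n (mmult n ?Q X) ?P)")
  unfolding upper_triangular_def
proof (intro allI impI)
  fix i j :: nat assume ji: "j < i"
  show "mmult n (mmult n ?Q X) ?P i j = 0"
  proof (cases "i<n \<and> j<n")
    case False then show ?thesis by (auto simp: mmult_def)
  next
    case True
    then obtain l where l: "l<n" "mmult n (mmult n ?Q X) ?P i j = mmult n ?Q X i l * ?P l j"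
      using mmult_attain by blast
    obtain k where k: "k<n" "mmult n ?Q X i l = ?Q i k * X k l"
      using mmult_attain True l by blast
    have "?Q i k * X k l * ?P l j = 0"
    proof (rule ccontr)
      assume nz: "?Q i k * X k l * ?P l j \<noteq> 0"
      then have "\<rho> k = i" "\<rho> l = j" "X k l \<noteq> 0" by (auto split: if_splits)
      then show False
        using edge[of k l] k l ji by (cases "k = l") auto
    qed
    then show ?thesis using l k by simp
  qed
qed

theorem theorem3p12:
  fixes n :: nat and A B :: "nat \<Rightarrow> nat \<Rightarrow> real"
  assumes "is_mmat n A" and "is_mmat n B"
    and "mtriangularizable n A" and "mtriangularizable n B"
    and "mmult n A A = A" and "mmult n B B = B"
    and "mnilpotent n (mplus n (mmult n A B) (mmult n B A))"
  shows "msim_triangularizable n A B"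
proof -
  note mA = assms(1) and mB = assms(2) and trA = assms(3) and trB = assms(4)
    and iA = assms(5) and iB = assms(6) and nil = assms(7)
  define C where "C = mplus n (mmult n A B) (mmult n B A)"
  define RA where "RA = {(i,j). i \<noteq> j \<and> A i j > 0}"
  define RB where "RB = {(i,j). i \<noteq> j \<and> B i j > 0}"
  define T where "T = {(i,j). i<n \<and> j<n \<and> C i j > 0}"
  have RAsub: "RA \<subseteq> {..<n} \<times> {..<n}"
  proof
    fix p assume "p \<in> RA"
    then obtain i j where "p = (i,j)" "A i j \<noteq> 0" unfolding RA_def by auto
    then show "p \<in> {..<n} \<times> {..<n}" using mmat_nz[OF mA, of i j] by auto
  qed
  have RBsub: "RB \<subseteq> {..<n} \<times> {..<n}"
  proof
    fix p assume "p \<in> RB"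
    then obtain i j where "p = (i,j)" "B i j \<noteq> 0" unfolding RB_def by auto
    then show "p \<in> {..<n} \<times> {..<n}" using mmat_nz[OF mB, of i j] by auto
  qed
  have tA: "RA O RA \<subseteq> RA"
  proof
    fix p assume "p \<in> RA O RA"
    then obtain i j k where p: "p = (i,k)" "(i,j)\<in>RA" "(j,k)\<in>RA" by blast
    then have "A i k > 0" using idem_trans[OF mA iA] unfolding RA_def by blast
    moreover have "i \<noteq> k" using p tri_no2[OF mA trA, of i j] unfolding RA_def by blast
    ultimately show "p \<in> RA" using p unfolding RA_def by blast
  qed
  have tB: "RB O RB \<subseteq> RB"
  proof
    fix p assume "p \<in> RB O RB"
    then obtain i j k where p: "p = (i,k)" "(i,j)\<in>RB" "(j,k)\<in>RB" by blast
    then have "B i k > 0" using idem_trans[OF mB iB] unfolding RB_def by blast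
    moreover have "i \<noteq> k" using p tri_no2[OF mB trB, of i j] unfolding RB_def by blast
    ultimately show "p \<in> RB" using p unfolding RB_def by blast
  qed
  have MT: "RA O RB \<subseteq> T"
  proof
    fix p assume "p \<in> RA O RB"
    then obtain i j k where p: "p = (i,k)" "(i,j)\<in>RA" "(j,k)\<in>RB" by blast
    then have lt: "i<n" "j<n" "k<n" using RAsub RBsub by auto
    have "0 < A i j * B j k" using p unfolding RA_def RB_def by simp
    also have "\<dots> \<le> mmult n A B i k" using mmult_ge lt by blast
    also have "\<dots> \<le> C i k" using lt unfolding C_def mplus_def by simp
    finally show "p \<in> T" using p lt unfolding T_def by blast
  qed
  have Tprop: "\<And>i j. (i,j)\<in>T \<Longrightarrow> i<n \<and> j<n \<and> C i j > 0" unfolding T_def by blast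
  have iM: "(x,x) \<notin> (RA O RB)\<^sup>+" for x
    using nil_acyc[OF Tprop nil[folded C_def]] trancl_mono[OF _ MT] by blast
  have ac: "(v,v) \<notin> (RA \<union> RB)\<^sup>+" for v
    by (rule acyc[OF tA tB _ _ iM]) (auto simp: RA_def RB_def)
  obtain \<rho> where bij: "bij_betw \<rho> {..<n} {..<n}" and ord: "\<forall>u v. (u,v)\<in>RA \<union> RB \<longrightarrow> \<rho> u < \<rho> v"
    using topo[of "RA \<union> RB" n] RAsub RBsub ac by blast
  have inj: "inj_on \<rho> {..<n}" and img: "\<rho> ` {..<n} = {..<n}" using bij by (auto simp: bij_betw_def)
  define P :: "nat \<Rightarrow> nat \<Rightarrow> real" where "P = (\<lambda>k j. if k<n \<and> j<n \<and> \<rho> k = j then 1 else 0)"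
  define Q :: "nat \<Rightarrow> nat \<Rightarrow> real" where "Q = (\<lambda>i k. if i<n \<and> k<n \<and> \<rho> k = i then 1 else 0)"
  have mP: "is_mmat n P" unfolding is_mmat_def P_def by auto
  have mQ: "is_mmat n Q" unfolding is_mmat_def Q_def by auto
  have PQ: "mmult n P Q = mid n"
  proof (intro ext)
    fix i j
    show "mmult n P Q i j = mid n i j"
    proof (cases "i<n \<and> j<n")
      case False then show ?thesis by (auto simp: mmult_def mid_def)
    next
      case True
      have ri: "\<rho> i < n" using img True by blast
      show ?thesis
      proof (rule mmult_eqI[where m="\<rho> i"])
        show "P i k * Q k j \<le> mid n i j" if "k<n" for k
          using True that inj unfolding P_def Q_def mid_def by (auto dest: inj_onD)
        show "P i (\<rho> i) * Q (\<rho> i) j = mid n i j"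
          using True ri inj unfolding P_def Q_def mid_def by (auto dest: inj_onD)
      qed (use True ri in auto)
    qed
  qed
  have QP: "mmult n Q P = mid n"
  proof (intro ext)
    fix i j
    show "mmult n Q P i j = mid n i j"
    proof (cases "i<n \<and> j<n")
      case False then show ?thesis by (auto simp: mmult_def mid_def)
    next
      case True
      obtain k0 where k0: "k0 < n" "\<rho> k0 = i" using img True by (metis imageE lessThan_iff)
      show ?thesis
      proof (rule mmult_eqI[where m=k0])
        show "Q i k * P k j \<le> mid n i j" if "k<n" for k
          using True that unfolding P_def Q_def mid_def by auto
        show "Q i k0 * P k0 j = mid n i j"
          using True k0 unfolding P_def Q_def mid_def by auto
      qed (use True k0 in auto)
    qed
  qed
  have utA: "upper_triangular (mmult n (mmult n Q A) P)" unfolding P_def Q_def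
  proof (rule ut_perm)
    fix k l assume "k<n" "l<n" "k\<noteq>l" "A k l \<noteq> 0"
    then have "(k,l) \<in> RA" using mmat_nonneg[OF mA, of k l] unfolding RA_def by auto
    then show "\<rho> k < \<rho> l" using ord by blast
  qed
  have utB: "upper_triangular (mmult n (mmult n Q B) P)" unfolding P_def Q_def
  proof (rule ut_perm)
    fix k l assume "k<n" "l<n" "k\<noteq>l" "B k l \<noteq> 0"
    then have "(k,l) \<in> RB" using mmat_nonneg[OF mB, of k l] unfolding RB_def by auto
    then show "\<rho> k < \<rho> l" using ord by blast
  qed
  show ?thesis unfolding msim_triangularizable_def minverse_pair_def
    using mP mQ PQ QP utA utB by blast
qed

end
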